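(* Identify the graded dual $\mathcal{A}^{\circledast}=\bigoplus_n(\mathbb K T_n)^*$ with $\mathcal{A}$ via the pairing $\langle t,s\rangle=\delta_{t,s}$ on trees. Let $\Delta$ on $\mathcal A^{\circledast}$ be the transpose of $*$, i.e. $\langle\Delta(t),u\otimes v\rangle=\langle t,u*v\rangle$ for all trees $u,v$, and for $\ltimes\in\{\prec,\cdot,\succ\}$ and a tree $t\ne|$ let $\Delta_\ltimes(t)$ be defined by $\langle\Delta_\ltimes(t),u\otimes v\rangle=\langle t,u\ltimes v\rangle$ for all trees $u,v$ not both equal to $|$. Then for every tree $t\neq|$ with $N$ leaves, $$\Delta(t)=\sum_{m=1}^{N}{}^m t\otimes t^m,$$ and $\Delta_\prec(t)$ (resp. $\Delta_\succ(t)$, resp. $\Delta_\cdot(t)$) is the sum of the terms ${}^mt\otimes t^m$ for which the path from the root to the $m$-th leaf leaves the root vertex through its right-most child (resp. through its left-most child, resp. through a child which is neither the left-most nor the right-most).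
   Context: Trees: planar rooted trees in which every internal vertex has at least two children; the root vertex hangs from a trunk edge; leaves are edges without upper vertex; $|$ is the one-leaf tree; $T_n$ = trees with $n+1$ leaves; $\mathcal A=\bigoplus_n\mathbb K T_n$. Products on $\mathcal A$: $x_0\vee\cdots\vee x_k$ ($k\ge1$) grafts trees left to right on a new root vertex; for $x=x^{(0)}\vee\cdots\vee x^{(k)}$, $y=y^{(0)}\vee\cdots\vee y^{(l)}$: $x\prec y=x^{(0)}\vee\cdots\vee x^{(k-1)}\vee(x^{(k)}*y)$, $x\cdot y=x^{(0)}\vee\cdots\vee x^{(k-1)}\vee(x^{(k)}*y^{(0)})\vee y^{(1)}\vee\cdots\vee y^{(l)}$, $x\succ y=(x*y^{(0)})\vee y^{(1)}\vee\cdots\vee y^{(l)}$, $*=\prec+\cdot+\succ$, $|*z=z*|=z$; augmented conventions for $a\ne|$: $|\prec a=0$, $a\prec|=a$, $|\succ a=a$, $a\succ|=0$, $|\cdot a=a\cdot|=0$. Lightning splitting: number the leaves of $t$ from $1$ to $N$ left to right and let $\gamma_m$ be the path from the root to leaf $m$. ${}^mt$ is obtained by deleting, at every internal vertex of $\gamma_m$, all subtrees hanging from children strictly to the right of $\gamma_m$, then contracting every vertex left with a single child; $t^m$ is obtained likewise by deleting everything strictly to the left of $\gamma_m$. Thus ${}^mt$ has $m$ leaves and $t^m$ has $N-m+1$ leaves. *)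

theory Defs
  imports Main "HOL-Library.Multiset" "HOL-Library.Function_Algebras"
begin

text \<open>Planar rooted trees: Leaf is the one-leaf tree (a bare trunk); Node cs is a root
vertex carrying the subtrees cs from left to right.\<close>

datatype ptree = Leaf | Node "ptree list"

fun wf_tree :: "ptree \<Rightarrow> bool" where
  "wf_tree Leaf = True"
| "wf_tree (Node cs) = (2 \<le> length cs \<and> list_all wf_tree cs)"

fun nleaves :: "ptree \<Rightarrow> nat" where
  "nleaves Leaf = 1"
| "nleaves (Node cs) = sum_list (map nleaves cs)"

lemma size_mem_le: "x \<in> set xs \<Longrightarrow> size x \<le> size_list size xs"
  by (induction xs) auto

lemma size_last_less: "xs \<noteq> [] \<Longrightarrow> size (last xs) < size (Node xs)"
  using size_mem_le[of "last xs" xs] by simp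

lemma size_hd_less: "xs \<noteq> [] \<Longrightarrow> size (hd xs) < size (Node xs)"
  using size_mem_le[of "hd xs" xs] by simp

lemma size_nth_less: "i < length xs \<Longrightarrow> size (xs ! i) < size (Node xs)"
  using size_mem_le[of "xs ! i" xs] by simp

lemma size_last_hd_less: "xs \<noteq> [] \<Longrightarrow> ys \<noteq> [] \<Longrightarrow>
   size (last xs) + size (hd ys) < size (Node xs) + size (Node ys)"
  using size_last_less[of xs] size_hd_less[of ys] by linarith

text \<open>The product * on trees (extended bilinearly; all structure constants are natural
numbers, so a linear combination with nonnegative integer coefficients is a multiset).\<close>

function star :: "ptree \<Rightarrow> ptree \<Rightarrow> ptree multiset" where
  "star Leaf y = {#y#}"
| "star (Node xs) Leaf = {#Node xs#}"
| "star (Node xs) (Node ys) =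
     (if xs = [] \<or> ys = [] then {#} else
        image_mset (\<lambda>z. Node (butlast xs @ [z])) (star (last xs) (Node ys))
      + image_mset (\<lambda>z. Node (butlast xs @ [z] @ tl ys)) (star (last xs) (hd ys))
      + image_mset (\<lambda>z. Node (z # tl ys)) (star (Node xs) (hd ys)))"
  by pat_completeness auto
termination
  by (relation "measure (\<lambda>(x, y). size x + size y)")
     (use size_last_less size_hd_less size_last_hd_less in force)+

text \<open>The three products, with the augmented conventions for the one-leaf tree.\<close>

fun lprod :: "ptree \<Rightarrow> ptree \<Rightarrow> ptree multiset" where
  "lprod Leaf y = {#}"
| "lprod (Node xs) Leaf = {#Node xs#}"
| "lprod (Node xs) (Node ys) = image_mset (\<lambda>z. Node (butlast xs @ [z])) (star (last xs) (Node ys))"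

fun dprod :: "ptree \<Rightarrow> ptree \<Rightarrow> ptree multiset" where
  "dprod Leaf y = {#}"
| "dprod (Node xs) Leaf = {#}"
| "dprod (Node xs) (Node ys) = image_mset (\<lambda>z. Node (butlast xs @ [z] @ tl ys)) (star (last xs) (hd ys))"

fun rprod :: "ptree \<Rightarrow> ptree \<Rightarrow> ptree multiset" where
  "rprod Leaf y = {#y#}"
| "rprod (Node xs) Leaf = {#}"
| "rprod (Node xs) (Node ys) = image_mset (\<lambda>z. Node (z # tl ys)) (star (Node xs) (hd ys))"

text \<open>Lightning splitting.  cidx cs m is the (0-based) index of the child of the root
through which the path to leaf m (1-based) leaves the root.\<close>

fun cidx :: "ptree list \<Rightarrow> nat \<Rightarrow> nat" where
  "cidx [] m = 0"
| "cidx (c # cs) m = (if m \<le> nleaves c then 0 else Suc (cidx cs (m - nleaves c)))"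

definition exit_idx :: "ptree list \<Rightarrow> nat \<Rightarrow> nat" where
  "exit_idx cs m = min (cidx cs m) (length cs - 1)"

lemma exit_idx_less: "cs \<noteq> [] \<Longrightarrow> exit_idx cs m < length cs"
  by (cases cs) (auto simp: exit_idx_def)

lemma size_exit_less: "cs \<noteq> [] \<Longrightarrow> size (cs ! exit_idx cs m) < Suc (size_list size cs)"
  using size_nth_less[OF exit_idx_less[of cs m]] by simp

function lsplit :: "ptree \<Rightarrow> nat \<Rightarrow> ptree" where
  "lsplit Leaf m = Leaf"
| "lsplit (Node cs) m =
     (if cs = [] then Leaf else
      (let j = exit_idx cs m; m' = m - sum_list (map nleaves (take j cs)) in
       if j = 0 then lsplit (cs ! j) m' else Node (take j cs @ [lsplit (cs ! j) m'])))"
  by pat_completeness auto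
termination
  by (relation "measure (\<lambda>(x, m). size x)")
     (auto simp: size_exit_less, metis size_exit_less)

function rsplit :: "ptree \<Rightarrow> nat \<Rightarrow> ptree" where
  "rsplit Leaf m = Leaf"
| "rsplit (Node cs) m =
     (if cs = [] then Leaf else
      (let j = exit_idx cs m; m' = m - sum_list (map nleaves (take j cs)) in
       if j = length cs - 1 then rsplit (cs ! j) m'
       else Node (rsplit (cs ! j) m' # drop (Suc j) cs)))"
  by pat_completeness auto
termination
  by (relation "measure (\<lambda>(x, m). size x)")
     (auto simp: size_exit_less)+

text \<open>Children of the root, and the elementary tensor u \<otimes> v in A \<otimes> A,
the latter identified with finitely supported functions on pairs of trees.\<close>

fun children :: "ptree \<Rightarrow> ptree list" where
  "children Leaf = []"
| "children (Node cs) = cs"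

definition tens :: "ptree \<Rightarrow> ptree \<Rightarrow> (ptree \<times> ptree \<Rightarrow> 'k::field)" where
  "tens u v = (\<lambda>p. if p = (u, v) then 1 else 0)"

text \<open>Transposed coproducts: the coefficient of u \<otimes> v in Delta(t) is the
coefficient of t in u * v (zero outside pairs of well-formed trees), and likewise for the
half-coproducts, which are only defined on pairs not both equal to Leaf.\<close>

definition Delta :: "ptree \<Rightarrow> (ptree \<times> ptree \<Rightarrow> 'k::field)" where
  "Delta t = (\<lambda>(u, v). if wf_tree u \<and> wf_tree v then of_nat (count (star u v) t) else 0)"

definition Delta_op :: "(ptree \<Rightarrow> ptree \<Rightarrow> ptree multiset) \<Rightarrow> ptree \<Rightarrow> (ptree \<times> ptree \<Rightarrow> 'k::field)" where
  "Delta_op op t = (\<lambda>(u, v). if wf_tree u \<and> wf_tree v \<and> \<not> (u = Leaf \<and> v = Leaf)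
                              then of_nat (count (op u v) t) else 0)"

end

theory Submission
  imports Defs
begin


definition F :: "ptree \<Rightarrow> (ptree \<times> ptree) list" where
  "F t = map (\<lambda>m. (lsplit t m, rsplit t m)) [1..<Suc (nleaves t)]"
definition pre :: "ptree list \<Rightarrow> nat \<Rightarrow> nat" where
  "pre cs j = sum_list (map nleaves (take j cs))"
definition gL :: "ptree list \<Rightarrow> nat \<Rightarrow> ptree \<Rightarrow> ptree" where
  "gL cs j a = (if j = 0 then a else Node (take j cs @ [a]))"
definition gR :: "ptree list \<Rightarrow> nat \<Rightarrow> ptree \<Rightarrow> ptree" where
  "gR cs j b = (if j = length cs - 1 then b else Node (b # drop (Suc j) cs))"
definition blk :: "ptree list \<Rightarrow> nat \<Rightarrow> (ptree \<times> ptree) list" where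
  "blk cs j = map (\<lambda>p. (gL cs j (fst p), gR cs j (snd p))) (F (cs ! j))"

lemma cidx_blk: "j < length cs \<Longrightarrow> 1 \<le> m \<Longrightarrow> m \<le> nleaves (cs ! j) \<Longrightarrow> cidx cs (pre cs j + m) = j"
proof (induction cs arbitrary: j)
  case Nil then show ?case by simp
next
  case (Cons c cs)
  show ?case
  proof (cases j)
    case 0 then show ?thesis using Cons by (simp add: pre_def)
  next
    case (Suc k)
    have "pre (c # cs) j = nleaves c + pre cs k" using Suc by (simp add: pre_def)
    then show ?thesis using Cons Suc by simp
  qed
qed

lemma exit_blk: "j < length cs \<Longrightarrow> 1 \<le> m \<Longrightarrow> m \<le> nleaves (cs ! j) \<Longrightarrow> exit_idx cs (pre cs j + m) = j"
  using cidx_blk[of j cs m] by (simp add: exit_idx_def)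

lemma split_blk:
  assumes "j < length cs" "1 \<le> m" "m \<le> nleaves (cs ! j)"
  shows "lsplit (Node cs) (pre cs j + m) = gL cs j (lsplit (cs ! j) m)
       \<and> rsplit (Node cs) (pre cs j + m) = gR cs j (rsplit (cs ! j) m)"
proof -
  have e: "exit_idx cs (pre cs j + m) = j" using exit_blk assms by blast
  have ne: "cs \<noteq> []" using assms by auto
  show ?thesis using e ne by (simp add: Let_def gL_def gR_def pre_def)
qed

lemma upt_shift: "[Suc a..<Suc (a + n)] = map ((+) a) [1..<Suc n]"
  by (induction n) auto

lemma pre_Suc: "pre (c # cs) (Suc j) = nleaves c + pre cs j"
  by (simp add: pre_def)
lemma pre_0: "pre cs 0 = 0"
  by (simp add: pre_def)

lemma range_split:
  "[Suc a..<Suc (a + sum_list (map nleaves cs))]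
   = concat (map (\<lambda>j. map ((+) (a + pre cs j)) [1..<Suc (nleaves (cs ! j))]) [0..<length cs])"
proof (induction cs arbitrary: a)
  case Nil then show ?case by simp
next
  case (Cons c cs)
  have 1: "[Suc a..<Suc (a + sum_list (map nleaves (c # cs)))]
        = [Suc a..<Suc (a + nleaves c)] @ [Suc (a + nleaves c)..<Suc ((a + nleaves c) + sum_list (map nleaves cs))]"
    using upt_add_eq_append[of "Suc a" "Suc (a + nleaves c)" "sum_list (map nleaves cs)"] by (simp add: add.assoc del: upt_Suc)
  have 2: "[Suc a..<Suc (a + nleaves c)] = map ((+) a) [1..<Suc (nleaves c)]"
    using upt_shift by blast
  have 3: "[0..<length (c # cs)] = 0 # map Suc [0..<length cs]"
    by (simp add: upt_conv_Cons map_Suc_upt del: upt_Suc)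
  show ?case
    unfolding 1 2 3 Cons.IH apply (simp add: pre_Suc pre_0 comp_def add.assoc del: upt_Suc)
    apply (intro arg_cong[where f=concat] map_cong refl)
    apply simp
    done
qed

lemma blk_one:
  assumes j: "j < length cs"
  shows "map (\<lambda>m. (lsplit (Node cs) m, rsplit (Node cs) m))
           (filter (\<lambda>m. Q (exit_idx cs m)) (map ((+) (pre cs j)) [1..<Suc (nleaves (cs ! j))]))
         = (if Q j then blk cs j else [])"
proof -
  have e: "\<forall>m \<in> set [1..<Suc (nleaves (cs ! j))]. exit_idx cs (pre cs j + m) = j"
    using exit_blk[OF j] by auto
  have f: "filter (\<lambda>m. Q (exit_idx cs m)) (map ((+) (pre cs j)) [1..<Suc (nleaves (cs ! j))])
        = (if Q j then map ((+) (pre cs j)) [1..<Suc (nleaves (cs ! j))] else [])"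
    using e by (auto simp: filter_map o_def intro: filter_True filter_False)
  have g: "map (\<lambda>m. (lsplit (Node cs) m, rsplit (Node cs) m)) (map ((+) (pre cs j)) [1..<Suc (nleaves (cs ! j))])
        = blk cs j"
    unfolding blk_def F_def map_map o_def
    by (rule map_cong[OF refl]) (use split_blk[OF j] in auto)
  show ?thesis using f g by simp
qed

lemma blocks:
  shows "map (\<lambda>m. (lsplit (Node cs) m, rsplit (Node cs) m))
           (filter (\<lambda>m. Q (exit_idx cs m)) [1..<Suc (nleaves (Node cs))])
         = concat (map (\<lambda>j. if Q j then blk cs j else []) [0..<length cs])"
proof -
  have r: "[1..<Suc (nleaves (Node cs))] = concat (map (\<lambda>j. map ((+) (pre cs j)) [1..<Suc (nleaves (cs ! j))]) [0..<length cs])"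
    using range_split[of 0 cs] by simp
  show ?thesis
    unfolding r filter_concat map_concat map_map comp_def
    by (rule arg_cong[where f=concat], rule map_cong[OF refl], rule blk_one) simp
qed

lemma count_concat: "count (mset (concat (map f js))) p = (\<Sum>j\<leftarrow>js. count (mset (f j)) p)"
  by (induction js) auto

lemma count_blocks:
  "count (mset (map (\<lambda>m. (lsplit (Node cs) m, rsplit (Node cs) m))
           (filter (\<lambda>m. Q (exit_idx cs m)) [1..<Suc (nleaves (Node cs))]))) p
   = (\<Sum>j\<in>{0..<length cs}. if Q j then count (mset (blk cs j)) p else 0)"
  unfolding blocks count_concat
  by (simp add: sum_set_upt_conv_sum_list_nat[symmetric], rule sum.cong) auto

lemma F_Node: "F (Node cs) = map (\<lambda>m. (lsplit (Node cs) m, rsplit (Node cs) m))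
           (filter (\<lambda>m. True) [1..<Suc (nleaves (Node cs))])"
  by (simp add: F_def del: nleaves.simps)

lemma count_F_Node: "count (mset (F (Node cs))) p = (\<Sum>j\<in>{0..<length cs}. count (mset (blk cs j)) p)"
  unfolding F_Node count_blocks[where Q="\<lambda>_. True"] by simp

lemma cnt_hit: "inj f \<Longrightarrow> count (mset (map f xs)) (f x) = count (mset xs) x"
  by (induction xs) (auto dest: injD)
lemma cnt_miss: "(\<forall>x. y \<noteq> f x) \<Longrightarrow> count (mset (map f xs)) y = 0"
  by (induction xs) auto
lemma icnt_hit: "inj f \<Longrightarrow> count (image_mset f M) (f x) = count M x"
  by (induction M) (auto dest: injD)
lemma icnt_miss: "(\<forall>x. y \<noteq> f x) \<Longrightarrow> count (image_mset f M) y = 0"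
  by (induction M) auto

lemma inj_gL: "inj (gL cs j)"
  by (auto simp: inj_def gL_def)
lemma inj_gR: "inj (gR cs j)"
  by (auto simp: inj_def gR_def)

lemma inj_blk: "inj (\<lambda>p. (gL cs j (fst p), gR cs j (snd p)))"
proof (rule injI)
  fix p q :: "ptree \<times> ptree"
  assume "(gL cs j (fst p), gR cs j (snd p)) = (gL cs j (fst q), gR cs j (snd q))"
  then have "gL cs j (fst p) = gL cs j (fst q)" "gR cs j (snd p) = gR cs j (snd q)" by simp_all
  then have "fst p = fst q" "snd p = snd q" using inj_gL[of cs j] inj_gR[of cs j] by (auto dest: injD)
  then show "p = q" by (simp add: prod_eq_iff)
qed

lemma blk_hit: "count (mset (blk cs j)) (gL cs j a, gR cs j b) = count (mset (F (cs ! j))) (a, b)"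
  using cnt_hit[OF inj_blk[of cs j], of "F (cs ! j)" "(a, b)"] unfolding blk_def by (simp only: fst_conv snd_conv)

lemma blk_miss: "(\<forall>a. u \<noteq> gL cs j a) \<or> (\<forall>b. v \<noteq> gR cs j b) \<Longrightarrow> count (mset (blk cs j)) (u, v) = 0"
  unfolding blk_def by (rule cnt_miss) blast

lemma sum_single: "finite S \<Longrightarrow> j0 \<in> S \<Longrightarrow> (\<And>j. j \<in> S \<Longrightarrow> j \<noteq> j0 \<Longrightarrow> f j = 0) \<Longrightarrow> sum f S = f j0"
proof -
  assume a: "finite S" "j0 \<in> S" "\<And>j. j \<in> S \<Longrightarrow> j \<noteq> j0 \<Longrightarrow> f j = 0"
  have "sum f S = f j0 + sum f (S - {j0})" using a(1,2) by (rule sum.remove)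
  moreover have "sum f (S - {j0}) = 0" using a(3) by (intro sum.neutral) blast
  ultimately show ?thesis by simp
qed

lemma F_Leaf: "F Leaf = [(Leaf, Leaf)]"
  by (simp add: F_def)

lemma P1: "wf_tree t \<Longrightarrow> count (mset (F t)) (Leaf, v) = (if v = t then 1 else 0)"
proof (induction t arbitrary: v)
  case Leaf then show ?case by (simp add: F_Leaf)
next
  case (Node cs)
  have len: "2 \<le> length cs" and wfc: "list_all wf_tree cs" using Node.prems by auto
  obtain c rest where cs: "cs = c # rest" using len by (cases cs) auto
  have rest: "rest \<noteq> []" using len cs by auto
  have gR0: "\<And>b. gR cs 0 b = Node (b # rest)" using cs rest by (simp add: gR_def)
  have "count (mset (F (Node cs))) (Leaf, v) = count (mset (blk cs 0)) (Leaf, v)"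
    unfolding count_F_Node
  proof (rule sum_single)
    fix j assume "j \<in> {0..<length cs}" "j \<noteq> 0"
    then show "count (mset (blk cs j)) (Leaf, v) = 0"
      by (intro blk_miss) (auto simp: gL_def)
  qed (use cs in simp_all)
  also have "\<dots> = (if v = Node cs then 1 else 0)"
  proof (cases "\<exists>b. v = Node (b # rest)")
    case True
    then obtain b where b: "v = Node (b # rest)" by blast
    have c0: "c \<in> set cs" using cs by auto
    have "count (mset (blk cs 0)) (Leaf, v) = count (mset (blk cs 0)) (gL cs 0 Leaf, gR cs 0 b)"
      by (simp add: gL_def gR0 b)
    then have "count (mset (blk cs 0)) (Leaf, v) = count (mset (F (cs ! 0))) (Leaf, b)"
      by (simp only: blk_hit)
    also have "\<dots> = (if b = c then 1 else 0)"
      using Node.IH[OF c0] wfc c0 cs by (simp add: list_all_iff)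
    finally show ?thesis using b cs by simp
  next
    case False
    then have "count (mset (blk cs 0)) (Leaf, v) = 0" by (intro blk_miss) (simp add: gR0)
    moreover have "v \<noteq> Node cs" using False cs by blast
    ultimately show ?thesis by simp
  qed
  finally show ?case .
qed

lemma P2: "wf_tree t \<Longrightarrow> count (mset (F t)) (u, Leaf) = (if u = t then 1 else 0)"
proof (induction t arbitrary: u)
  case Leaf then show ?case by (simp add: F_Leaf)
next
  case (Node cs)
  have len: "2 \<le> length cs" and wfc: "list_all wf_tree cs" using Node.prems by auto
  obtain ys c where cs: "cs = ys @ [c]" using len by (cases cs rule: rev_exhaust) auto
  define k where "k = length cs - 1"
  have k: "k < length cs" "k \<noteq> 0" "k = length ys" using len cs by (auto simp: k_def)
  have gLk: "\<And>a. gL cs k a = Node (ys @ [a])" using k cs by (simp add: gL_def)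
  have ck: "cs ! k = c" using k cs by simp
  have "count (mset (F (Node cs))) (u, Leaf) = count (mset (blk cs k)) (u, Leaf)"
    unfolding count_F_Node
  proof (rule sum_single)
    fix j assume "j \<in> {0..<length cs}" "j \<noteq> k"
    then show "count (mset (blk cs j)) (u, Leaf) = 0"
      by (intro blk_miss) (auto simp: gR_def k_def)
  qed (use k(1) in simp_all)
  also have "\<dots> = (if u = Node cs then 1 else 0)"
  proof (cases "\<exists>a. u = Node (ys @ [a])")
    case True
    then obtain a where a: "u = Node (ys @ [a])" by blast
    have c0: "c \<in> set cs" using cs by auto
    have "count (mset (blk cs k)) (u, Leaf) = count (mset (blk cs k)) (gL cs k a, gR cs k Leaf)"
      using gLk[of a] a by (simp add: gR_def k_def)
    then have "count (mset (blk cs k)) (u, Leaf) = count (mset (F (cs ! k))) (a, Leaf)"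
      by (simp only: blk_hit)
    also have "\<dots> = (if a = c then 1 else 0)"
      using Node.IH[OF c0] wfc c0 ck by (simp add: list_all_iff)
    finally show ?thesis using a cs by simp
  next
    case False
    then have "count (mset (blk cs k)) (u, Leaf) = 0" by (intro blk_miss) (simp add: gLk)
    moreover have "u \<noteq> Node cs" using False cs by blast
    ultimately show ?thesis by simp
  qed
  finally show ?case .
qed

lemma set_F_Node: "set (F (Node cs)) = (\<Union>j\<in>{0..<length cs}. set (blk cs j))"
  unfolding F_Node blocks[where Q="\<lambda>_. True"] by (auto simp del: lsplit.simps rsplit.simps)

lemma WF: "wf_tree t \<Longrightarrow> p \<in> set (F t) \<Longrightarrow> wf_tree (fst p) \<and> wf_tree (snd p)"
proof (induction t arbitrary: p)
  case Leaf then show ?case by (simp add: F_Leaf)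
next
  case (Node cs)
  have len: "2 \<le> length cs" and wfc: "\<forall>c\<in>set cs. wf_tree c" using Node.prems by (auto simp: list_all_iff)
  from Node.prems(2) obtain j where j: "j < length cs" and pj: "p \<in> set (blk cs j)"
    unfolding set_F_Node by auto
  then obtain a b where q: "(a, b) \<in> set (F (cs ! j))" and p: "p = (gL cs j a, gR cs j b)"
    unfolding blk_def by auto
  have cj: "cs ! j \<in> set cs" using j by (rule nth_mem)
  have wq: "wf_tree a" "wf_tree b" using Node.IH[OF cj] wfc cj q by fastforce+
  have "wf_tree (gL cs j a)"
  proof (cases "j = 0")
    case False
    have w1: "\<forall>c \<in> set (take j cs). wf_tree c" using wfc by (meson in_set_takeD)
    have l1: "2 \<le> length (take j cs @ [a])" using False j by simp
    have "list_all wf_tree (take j cs @ [a])" using w1 wq by (simp add: list_all_iff)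
    then have "wf_tree (Node (take j cs @ [a]))" using l1 by (simp only: wf_tree.simps)
    then show ?thesis using False by (simp add: gL_def)
  qed (use wq in \<open>simp add: gL_def\<close>)
  moreover have "wf_tree (gR cs j b)"
  proof (cases "j = length cs - 1")
    case False
    have w1: "\<forall>c \<in> set (drop (Suc j) cs). wf_tree c" using wfc by (meson in_set_dropD)
    have l1: "2 \<le> length (b # drop (Suc j) cs)" using False j by simp
    have "list_all wf_tree (b # drop (Suc j) cs)" using w1 wq by (simp add: list_all_iff)
    then have "wf_tree (Node (b # drop (Suc j) cs))" using l1 by (simp only: wf_tree.simps)
    then show ?thesis using False by (simp add: gR_def)
  qed (use wq in \<open>simp add: gR_def\<close>)
  ultimately show ?case unfolding p fst_conv snd_conv by (rule conjI)
qed



lemma lemA: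
  assumes xs: "xs \<noteq> []" and len: "2 \<le> length cs"
    and IH: "\<And>c. wf_tree c \<Longrightarrow> count (star (last xs) (Node ys)) c = count (mset (F c)) (last xs, Node ys)"
    and wfl: "wf_tree (last cs)"
  shows "count (image_mset (\<lambda>z. Node (butlast xs @ [z])) (star (last xs) (Node ys))) (Node cs)
         = count (mset (blk cs (length cs - 1))) (Node xs, Node ys)"
proof -
  obtain zs c where cs: "cs = zs @ [c]" using len by (cases cs rule: rev_exhaust) auto
  define k where "k = length cs - 1"
  have k: "k = length zs" "k \<noteq> 0" using cs len by (auto simp: k_def)
  have gLk: "\<And>a. gL cs k a = Node (zs @ [a])" using k cs by (simp add: gL_def)
  have gRk: "\<And>b. gR cs k b = b" by (simp add: gR_def k_def)
  have ck: "cs ! k = c" using k cs by simp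
  have injf: "inj (\<lambda>z. Node (butlast xs @ [z]))" by (auto simp: inj_def)
  show ?thesis
  proof (cases "butlast xs = zs")
    case True
    have xs_eq: "xs = zs @ [last xs]" using True xs by (metis append_butlast_last_id)
    have "count (image_mset (\<lambda>z. Node (butlast xs @ [z])) (star (last xs) (Node ys))) (Node cs)
        = count (star (last xs) (Node ys)) c"
      using icnt_hit[OF injf, of "star (last xs) (Node ys)" c] True cs by simp
    also have "\<dots> = count (mset (F c)) (last xs, Node ys)" using IH wfl cs by simp
    also have "\<dots> = count (mset (blk cs k)) (gL cs k (last xs), gR cs k (Node ys))"
      by (simp only: blk_hit ck)
    also have "(gL cs k (last xs), gR cs k (Node ys)) = (Node xs, Node ys)"
      using gLk gRk xs_eq by simp
    finally show ?thesis by (simp add: k_def)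
  next
    case False
    have "count (image_mset (\<lambda>z. Node (butlast xs @ [z])) (star (last xs) (Node ys))) (Node cs) = 0"
      by (rule icnt_miss) (use False cs in auto)
    moreover have "count (mset (blk cs k)) (Node xs, Node ys) = 0"
      by (rule blk_miss) (use False gLk in auto)
    ultimately show ?thesis by (simp add: k_def)
  qed
qed

lemma lemC:
  assumes ys: "ys \<noteq> []" and len: "2 \<le> length cs"
    and IH: "\<And>c. wf_tree c \<Longrightarrow> count (star (Node xs) (hd ys)) c = count (mset (F c)) (Node xs, hd ys)"
    and wfh: "wf_tree (hd cs)"
  shows "count (image_mset (\<lambda>z. Node (z # tl ys)) (star (Node xs) (hd ys))) (Node cs)
         = count (mset (blk cs 0)) (Node xs, Node ys)"
proof -
  obtain c rest where cs: "cs = c # rest" using len by (cases cs) auto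
  have rest: "rest \<noteq> []" using len cs by auto
  have gR0: "\<And>b. gR cs 0 b = Node (b # rest)" using cs rest by (simp add: gR_def)
  have gL0: "\<And>a. gL cs 0 a = a" by (simp add: gL_def)
  have injf: "inj (\<lambda>z. Node (z # tl ys))" by (auto simp: inj_def)
  show ?thesis
  proof (cases "tl ys = rest")
    case True
    have ys_eq: "ys = hd ys # rest" using True ys by (metis list.collapse)
    have "count (image_mset (\<lambda>z. Node (z # tl ys)) (star (Node xs) (hd ys))) (Node cs)
        = count (star (Node xs) (hd ys)) c"
      using icnt_hit[OF injf, of "star (Node xs) (hd ys)" c] True cs by simp
    also have "\<dots> = count (mset (F c)) (Node xs, hd ys)" using IH wfh cs by simp
    also have "\<dots> = count (mset (blk cs 0)) (gL cs 0 (Node xs), gR cs 0 (hd ys))"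
      using blk_hit[of cs 0 "Node xs" "hd ys"] cs by simp
    also have "(gL cs 0 (Node xs), gR cs 0 (hd ys)) = (Node xs, Node ys)"
      using gL0 gR0 ys_eq by simp
    finally show ?thesis .
  next
    case False
    have "count (image_mset (\<lambda>z. Node (z # tl ys)) (star (Node xs) (hd ys))) (Node cs) = 0"
      by (rule icnt_miss) (use False cs in auto)
    moreover have "count (mset (blk cs 0)) (Node xs, Node ys) = 0"
      by (rule blk_miss) (use False gR0 in auto)
    ultimately show ?thesis by simp
  qed
qed



lemma lemB:
  assumes lx: "2 \<le> length xs" and ly: "2 \<le> length ys" and len: "2 \<le> length cs"
    and IH: "\<And>c. wf_tree c \<Longrightarrow> count (star (last xs) (hd ys)) c = count (mset (F c)) (last xs, hd ys)"
    and wfc: "list_all wf_tree cs"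
  shows "count (image_mset (\<lambda>z. Node (butlast xs @ [z] @ tl ys)) (star (last xs) (hd ys))) (Node cs)
         = (\<Sum>j\<in>{1..<length cs - 1}. count (mset (blk cs j)) (Node xs, Node ys))"
proof -
  have injf: "inj (\<lambda>z. Node (butlast xs @ [z] @ tl ys))" by (auto simp: inj_def)
  have xs_eq: "xs = butlast xs @ [last xs]" using lx by (metis append_butlast_last_id list.size(3) not_numeral_le_zero)
  have ys_eq: "ys = hd ys # tl ys" using ly by (metis list.collapse list.size(3) not_numeral_le_zero)
  have gLj: "\<And>j a. j \<noteq> 0 \<Longrightarrow> gL cs j a = Node (take j cs @ [a])" by (simp add: gL_def)
  have gRj: "\<And>j b. j \<noteq> length cs - 1 \<Longrightarrow> gR cs j b = Node (b # drop (Suc j) cs)" by (simp add: gR_def)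
  show ?thesis
  proof (cases "\<exists>c. cs = butlast xs @ [c] @ tl ys")
    case True
    then obtain c where cs: "cs = butlast xs @ [c] @ tl ys" by blast
    define j0 where "j0 = length xs - 1"
    have lbx: "length (butlast xs) = j0" by (simp add: j0_def)
    have j0: "j0 \<in> {1..<length cs - 1}" using lx ly cs by (auto simp: j0_def)
    have cj0: "cs ! j0 = c" using cs lbx by (simp add: nth_append)
    have tk: "take j0 cs = butlast xs" using cs lbx by simp
    have dr: "drop (Suc j0) cs = tl ys" using cs lbx by simp
    have wc: "wf_tree c" using wfc cs by (simp add: list_all_iff)
    have "count (image_mset (\<lambda>z. Node (butlast xs @ [z] @ tl ys)) (star (last xs) (hd ys))) (Node cs)
        = count (star (last xs) (hd ys)) c"
      using icnt_hit[OF injf, of "star (last xs) (hd ys)" c] cs by simp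
    also have "\<dots> = count (mset (F c)) (last xs, hd ys)" using IH wc by simp
    also have "\<dots> = count (mset (blk cs j0)) (gL cs j0 (last xs), gR cs j0 (hd ys))"
      using blk_hit[of cs j0 "last xs" "hd ys"] cj0 by simp
    also have "(gL cs j0 (last xs), gR cs j0 (hd ys)) = (Node xs, Node ys)"
      using gLj[of j0 "last xs"] gRj[of j0 "hd ys"] j0 tk dr xs_eq ys_eq by auto
    also have "count (mset (blk cs j0)) (Node xs, Node ys)
        = (\<Sum>j\<in>{1..<length cs - 1}. count (mset (blk cs j)) (Node xs, Node ys))"
    proof (rule sum_single[symmetric])
      fix j assume j: "j \<in> {1..<length cs - 1}" "j \<noteq> j0"
      show "count (mset (blk cs j)) (Node xs, Node ys) = 0"
      proof (rule blk_miss, rule disjI1, intro allI notI)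
        fix a assume "Node xs = gL cs j a"
        then have "xs = take j cs @ [a]" using gLj[of j a] j by simp
        then have "length xs = Suc j" using j by (auto simp: min_def)
        then show False using j j0_def by simp
      qed
    qed (use j0 in simp_all)
    finally show ?thesis .
  next
    case False
    have "count (image_mset (\<lambda>z. Node (butlast xs @ [z] @ tl ys)) (star (last xs) (hd ys))) (Node cs) = 0"
      by (rule icnt_miss) (use False in auto)
    moreover have "(\<Sum>j\<in>{1..<length cs - 1}. count (mset (blk cs j)) (Node xs, Node ys)) = 0"
    proof (rule sum.neutral, rule ballI)
      fix j assume j: "j \<in> {1..<length cs - 1}"
      show "count (mset (blk cs j)) (Node xs, Node ys) = 0"
      proof (rule ccontr)
        assume nz: "count (mset (blk cs j)) (Node xs, Node ys) \<noteq> 0"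
        have "\<not> ((\<forall>a. Node xs \<noteq> gL cs j a) \<or> (\<forall>b. Node ys \<noteq> gR cs j b))"
        proof
          assume h: "(\<forall>a. Node xs \<noteq> gL cs j a) \<or> (\<forall>b. Node ys \<noteq> gR cs j b)"
          show False using blk_miss[OF h] nz by simp
        qed
        then obtain a b where a: "Node xs = gL cs j a" and b: "Node ys = gR cs j b" by blast
        have "xs = take j cs @ [a]" using gLj[of j a] a j by simp
        then have bx: "butlast xs = take j cs" by simp
        have "ys = b # drop (Suc j) cs" using gRj[of j b] b j by simp
        then have ty: "tl ys = drop (Suc j) cs" by simp
        have jl: "j < length cs" using j by auto
        have "cs = take j cs @ [cs ! j] @ drop (Suc j) cs" using id_take_nth_drop[OF jl] by simp
        then have "cs = butlast xs @ [cs ! j] @ tl ys" using bx ty by simp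
        then show False using False by blast
      qed
    qed
    ultimately show ?thesis by simp
  qed
qed

lemma count_star_Leaf: "count (star u v) Leaf = (if u = Leaf \<and> v = Leaf then 1 else 0)"
  by (cases "(u, v)" rule: star.cases) (auto intro!: icnt_miss)

lemma main: "wf_tree u \<Longrightarrow> wf_tree v \<Longrightarrow> wf_tree t \<Longrightarrow> count (star u v) t = count (mset (F t)) (u, v)"
proof (induction u v arbitrary: t rule: star.induct)
  case (1 y t)
  then show ?case using P1[of t y] by auto
next
  case (2 xs t)
  then show ?case using P2[of t "Node xs"] by auto
next
  case (3 xs ys t)
  have lx: "2 \<le> length xs" and ly: "2 \<le> length ys" using "3.prems" by auto
  have ne: "\<not> (xs = [] \<or> ys = [])" using lx ly by auto
  have wxs: "list_all wf_tree xs" and wys: "list_all wf_tree ys" using "3.prems" by auto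
  have wl: "wf_tree (last xs)" using wxs ne by (simp add: list_all_iff)
  have wh: "wf_tree (hd ys)" using wys ne by (simp add: list_all_iff)
  show ?case
  proof (cases t)
    case Leaf
    then show ?thesis by (simp add: count_star_Leaf F_Leaf del: star.simps)
  next
    case (Node cs)
    have len: "2 \<le> length cs" and wfc: "list_all wf_tree cs" using "3.prems" Node by auto
    have csne: "cs \<noteq> []" using len by auto
    have wlc: "wf_tree (last cs)" and whc: "wf_tree (hd cs)"
      using wfc last_in_set[OF csne] hd_in_set[OF csne] by (auto simp: list_all_iff)
    have A: "count (image_mset (\<lambda>z. Node (butlast xs @ [z])) (star (last xs) (Node ys))) (Node cs)
         = count (mset (blk cs (length cs - 1))) (Node xs, Node ys)"
      by (rule lemA) (use ne len wlc "3.IH"(1)[OF ne wl "3.prems"(2)] in auto)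
    have B: "count (image_mset (\<lambda>z. Node (butlast xs @ [z] @ tl ys)) (star (last xs) (hd ys))) (Node cs)
         = (\<Sum>j\<in>{1..<length cs - 1}. count (mset (blk cs j)) (Node xs, Node ys))"
      by (rule lemB) (use lx ly len wfc "3.IH"(2)[OF ne wl wh] in auto)
    have C: "count (image_mset (\<lambda>z. Node (z # tl ys)) (star (Node xs) (hd ys))) (Node cs)
         = count (mset (blk cs 0)) (Node xs, Node ys)"
      by (rule lemC) (use ne len whc "3.IH"(3)[OF ne "3.prems"(1) wh] in auto)
    have S: "(\<Sum>j\<in>{0..<length cs}. count (mset (blk cs j)) (Node xs, Node ys))
       = count (mset (blk cs 0)) (Node xs, Node ys)
         + (\<Sum>j\<in>{1..<length cs - 1}. count (mset (blk cs j)) (Node xs, Node ys))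
         + count (mset (blk cs (length cs - 1))) (Node xs, Node ys)"
    proof -
      obtain n where n: "length cs = Suc (Suc n)" using len by (metis add_2_eq_Suc le_Suc_ex)
      let ?f = "\<lambda>j. count (mset (blk cs j)) (Node xs, Node ys)"
      have e1: "sum ?f {0..<Suc (Suc n)} = ?f 0 + sum ?f {Suc 0..<Suc (Suc n)}"
        by (rule sum.atLeast_Suc_lessThan) simp
      have e2: "sum ?f {Suc 0..<Suc (Suc n)} = sum ?f {Suc 0..<Suc n} + ?f (Suc n)"
        by (rule sum.atLeastLessThan_Suc) simp
      show ?thesis unfolding n using e1 e2 by simp
    qed
    show ?thesis
      using A B C S ne unfolding Node count_F_Node by simp
  qed
qed



lemma Lblk:
  assumes wu: "wf_tree u" and wv: "wf_tree v" and wt: "wf_tree (Node cs)"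
  shows "count (lprod u v) (Node cs) = count (mset (blk cs (length cs - 1))) (u, v)"
proof -
  have len: "2 \<le> length cs" and wfc: "list_all wf_tree cs" using wt by auto
  obtain zs c where cs: "cs = zs @ [c]" using len by (cases cs rule: rev_exhaust) auto
  define k where "k = length cs - 1"
  have k: "k = length zs" "k \<noteq> 0" using cs len by (auto simp: k_def)
  have gLk: "\<And>a. gL cs k a = Node (zs @ [a])" using k cs by (simp add: gL_def)
  have gRk: "\<And>b. gR cs k b = b" by (simp add: gR_def k_def)
  have ck: "cs ! k = c" using k cs by simp
  have wc: "wf_tree c" using wfc cs by (simp add: list_all_iff)
  show ?thesis
  proof (cases u)
    case Leaf
    have "count (mset (blk cs k)) (u, v) = 0" by (rule blk_miss) (simp add: gLk Leaf)
    then show ?thesis using Leaf by (simp add: k_def)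
  next
    case (Node xs)
    show ?thesis
    proof (cases v)
      case Leaf
      have l: "count (lprod u v) (Node cs) = (if xs = cs then 1 else 0)" using Node Leaf by simp
      show ?thesis
      proof (cases "\<exists>a. xs = zs @ [a]")
        case True
        then obtain a where a: "xs = zs @ [a]" by blast
        have "count (mset (blk cs k)) (u, v) = count (mset (blk cs k)) (gL cs k a, gR cs k Leaf)"
          using Node Leaf a gLk gRk by simp
        also have "\<dots> = count (mset (F c)) (a, Leaf)" by (simp only: blk_hit ck)
        also have "\<dots> = (if a = c then 1 else 0)" using P2[OF wc] by simp
        finally show ?thesis using l a cs by (simp add: k_def)
      next
        case False
        have "count (mset (blk cs k)) (u, v) = 0" by (rule blk_miss) (use False Node gLk in auto)
        moreover have "xs \<noteq> cs" using False cs by blast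
        ultimately show ?thesis using l by (simp add: k_def)
      qed
    next
      case (Node ys)
      have xsne: "xs \<noteq> []" using wu \<open>u = Node xs\<close> by auto
      have wl: "wf_tree (last xs)" using wu \<open>u = Node xs\<close> xsne last_in_set[OF xsne] by (auto simp: list_all_iff)
      have "count (lprod u v) (Node cs) = count (image_mset (\<lambda>z. Node (butlast xs @ [z])) (star (last xs) (Node ys))) (Node cs)"
        using \<open>u = Node xs\<close> Node by simp
      also have "\<dots> = count (mset (blk cs (length cs - 1))) (Node xs, Node ys)"
        by (rule lemA) (use xsne len wc cs main[OF wl wv[unfolded Node]] in auto)
      finally show ?thesis using \<open>u = Node xs\<close> Node by simp
    qed
  qed
qed

lemma Rblk:
  assumes wu: "wf_tree u" and wv: "wf_tree v" and wt: "wf_tree (Node cs)"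
  shows "count (rprod u v) (Node cs) = count (mset (blk cs 0)) (u, v)"
proof -
  have len: "2 \<le> length cs" and wfc: "list_all wf_tree cs" using wt by auto
  obtain c rest where cs: "cs = c # rest" using len by (cases cs) auto
  have rest: "rest \<noteq> []" using len cs by auto
  have gR0: "\<And>b. gR cs 0 b = Node (b # rest)" using cs rest by (simp add: gR_def)
  have gL0: "\<And>a. gL cs 0 a = a" by (simp add: gL_def)
  have c0: "cs ! 0 = c" using cs by simp
  have wc: "wf_tree c" using wfc cs by simp
  show ?thesis
  proof (cases u)
    case Leaf
    have l: "count (rprod u v) (Node cs) = (if v = Node cs then 1 else 0)" using Leaf by simp
    show ?thesis
    proof (cases "\<exists>b. v = Node (b # rest)")
      case True
      then obtain b where b: "v = Node (b # rest)" by blast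
      have "count (mset (blk cs 0)) (u, v) = count (mset (blk cs 0)) (gL cs 0 Leaf, gR cs 0 b)"
        using Leaf b gL0 gR0 by simp
      also have "\<dots> = count (mset (F c)) (Leaf, b)" by (simp only: blk_hit c0)
      also have "\<dots> = (if b = c then 1 else 0)" using P1[OF wc] by simp
      finally show ?thesis using l b cs by simp
    next
      case False
      have "count (mset (blk cs 0)) (u, v) = 0" by (rule blk_miss) (use False gR0 in auto)
      moreover have "v \<noteq> Node cs" using False cs by blast
      ultimately show ?thesis using l by simp
    qed
  next
    case (Node xs)
    show ?thesis
    proof (cases v)
      case Leaf
      have "count (mset (blk cs 0)) (u, v) = 0" by (rule blk_miss) (simp add: gR0 Leaf)
      then show ?thesis using Leaf Node by simp
    next
      case (Node ys)
      have ysne: "ys \<noteq> []" using wv \<open>v = Node ys\<close> by auto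
      have wh: "wf_tree (hd ys)" using wv \<open>v = Node ys\<close> ysne hd_in_set[OF ysne] by (auto simp: list_all_iff)
      have "count (rprod u v) (Node cs) = count (image_mset (\<lambda>z. Node (z # tl ys)) (star (Node xs) (hd ys))) (Node cs)"
        using \<open>u = Node xs\<close> Node by simp
      also have "\<dots> = count (mset (blk cs 0)) (Node xs, Node ys)"
        by (rule lemC) (use ysne len wc cs main[OF wu[unfolded \<open>u = Node xs\<close>] wh] in auto)
      finally show ?thesis using \<open>u = Node xs\<close> Node by simp
    qed
  qed
qed

lemma Dblk:
  assumes wu: "wf_tree u" and wv: "wf_tree v" and wt: "wf_tree (Node cs)"
  shows "count (dprod u v) (Node cs) = (\<Sum>j\<in>{1..<length cs - 1}. count (mset (blk cs j)) (u, v))"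
proof -
  have len: "2 \<le> length cs" and wfc: "list_all wf_tree cs" using wt by auto
  show ?thesis
  proof (cases u)
    case Leaf
    have "\<forall>j\<in>{1..<length cs - 1}. count (mset (blk cs j)) (u, v) = 0"
      by (intro ballI blk_miss disjI1 allI) (auto simp: gL_def Leaf)
    then show ?thesis using Leaf by simp
  next
    case (Node xs)
    show ?thesis
    proof (cases v)
      case Leaf
      have "\<forall>j\<in>{1..<length cs - 1}. count (mset (blk cs j)) (u, v) = 0"
        by (intro ballI blk_miss disjI2 allI) (auto simp: gR_def Leaf)
      then show ?thesis using Leaf Node by simp
    next
      case (Node ys)
      have lx: "2 \<le> length xs" and ly: "2 \<le> length ys"
        using wu wv \<open>u = Node xs\<close> Node by auto
      have xsne: "xs \<noteq> []" and ysne: "ys \<noteq> []" using lx ly by auto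
      have wl: "wf_tree (last xs)" using wu \<open>u = Node xs\<close> xsne last_in_set[OF xsne] by (auto simp: list_all_iff)
      have wh: "wf_tree (hd ys)" using wv \<open>v = Node ys\<close> ysne hd_in_set[OF ysne] by (auto simp: list_all_iff)
      have "count (dprod u v) (Node cs) = count (image_mset (\<lambda>z. Node (butlast xs @ [z] @ tl ys)) (star (last xs) (hd ys))) (Node cs)"
        using \<open>u = Node xs\<close> Node by simp
      also have "\<dots> = (\<Sum>j\<in>{1..<length cs - 1}. count (mset (blk cs j)) (Node xs, Node ys))"
        by (rule lemB) (use lx ly len wfc main[OF wl wh] in auto)
      finally show ?thesis using \<open>u = Node xs\<close> Node by simp
    qed
  qed
qed



lemma sum_fun_apply: "(sum f S) p = (\<Sum>m\<in>S. f m p)"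
  by (induction S rule: infinite_finite_induct) auto

lemma sum_ind_list: "(\<Sum>x\<leftarrow>xs. (if p = f x then 1 else 0 :: 'k::field)) = of_nat (count (mset (map f xs)) p)"
  by (induction xs) auto

lemma tens_sum:
  "(\<Sum>m\<in>{m \<in> {1..N}. P m}. tens (l m) (r m) :: ptree \<times> ptree \<Rightarrow> 'k::field) p
   = of_nat (count (mset (map (\<lambda>m. (l m, r m)) (filter P [1..<Suc N]))) p)"
proof -
  have S: "{m \<in> {1..N}. P m} = set (filter P [1..<Suc N])" by auto
  have d: "distinct (filter P [1..<Suc N])" by simp
  have "(\<Sum>m\<in>{m \<in> {1..N}. P m}. tens (l m) (r m) :: ptree \<times> ptree \<Rightarrow> 'k) p
      = (\<Sum>m\<in>{m \<in> {1..N}. P m}. (if p = (l m, r m) then 1 else 0 :: 'k))"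
    by (simp add: sum_fun_apply tens_def)
  also have "\<dots> = (\<Sum>m\<leftarrow>filter P [1..<Suc N]. (if p = (l m, r m) then 1 else 0 :: 'k))"
    unfolding S by (rule sum_list_distinct_conv_sum_set[symmetric, OF d])
  also have "\<dots> = of_nat (count (mset (map (\<lambda>m. (l m, r m)) (filter P [1..<Suc N]))) p)"
    using sum_ind_list[of p "\<lambda>m. (l m, r m)" "filter P [1..<Suc N]"] by simp
  finally show ?thesis .
qed

lemma filtT: "filter (\<lambda>_. True) xs = xs" by simp

lemma sepT: "{m \<in> A. True} = A" by simp

lemma count_filter_nonwf:
  assumes wt: "wf_tree t" and nw: "\<not> (wf_tree u \<and> wf_tree v)"
  shows "count (mset (map (\<lambda>m. (lsplit t m, rsplit t m)) (filter P [1..<Suc (nleaves t)]))) (u, v) = 0"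
proof -
  have "(u, v) \<notin> set (F t)" using WF[OF wt, of "(u, v)"] nw by auto
  then have "(u, v) \<notin> set (map (\<lambda>m. (lsplit t m, rsplit t m)) (filter P [1..<Suc (nleaves t)]))"
    unfolding F_def by auto
  then show ?thesis by (simp add: count_eq_zero_iff)
qed

lemma final_op:
  assumes wt: "wf_tree (Node cs)"
    and H: "\<And>u v. wf_tree u \<Longrightarrow> wf_tree v \<Longrightarrow> count (op u v) (Node cs)
              = (\<Sum>j\<in>{0..<length cs}. if Q j then count (mset (blk cs j)) (u, v) else 0)"
    and LL: "count (op Leaf Leaf) (Node cs) = 0"
  shows "(Delta_op op (Node cs) :: ptree \<times> ptree \<Rightarrow> 'k::field)
       = (\<Sum>m\<in>{m \<in> {1..nleaves (Node cs)}. Q (exit_idx cs m)}. tens (lsplit (Node cs) m) (rsplit (Node cs) m))"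
proof (rule ext)
  fix p :: "ptree \<times> ptree"
  obtain u v where p: "p = (u, v)" by (cases p)
  have R: "(\<Sum>m\<in>{m \<in> {1..nleaves (Node cs)}. Q (exit_idx cs m)}. tens (lsplit (Node cs) m) (rsplit (Node cs) m) :: ptree \<times> ptree \<Rightarrow> 'k) p
     = of_nat (count (mset (map (\<lambda>m. (lsplit (Node cs) m, rsplit (Node cs) m)) (filter (\<lambda>m. Q (exit_idx cs m)) [1..<Suc (nleaves (Node cs))]))) p)"
    by (rule tens_sum)
  have DL: "(Delta_op op (Node cs) :: ptree \<times> ptree \<Rightarrow> 'k) p
     = (if wf_tree u \<and> wf_tree v \<and> \<not> (u = Leaf \<and> v = Leaf) then of_nat (count (op u v) (Node cs)) else 0)"
    by (simp add: Delta_op_def p del: nleaves.simps lsplit.simps rsplit.simps)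
  show "(Delta_op op (Node cs) :: ptree \<times> ptree \<Rightarrow> 'k) p = (\<Sum>m\<in>{m \<in> {1..nleaves (Node cs)}. Q (exit_idx cs m)}. tens (lsplit (Node cs) m) (rsplit (Node cs) m)) p"
    unfolding DL R
  proof (cases "wf_tree u \<and> wf_tree v")
    case True
    have c: "count (mset (map (\<lambda>m. (lsplit (Node cs) m, rsplit (Node cs) m)) (filter (\<lambda>m. Q (exit_idx cs m)) [1..<Suc (nleaves (Node cs))]))) p
       = count (op u v) (Node cs)"
      unfolding p count_blocks by (rule H[symmetric]) (use True in auto)
    show "(if wf_tree u \<and> wf_tree v \<and> \<not> (u = Leaf \<and> v = Leaf) then of_nat (count (op u v) (Node cs)) else 0)
      = (of_nat (count (mset (map (\<lambda>m. (lsplit (Node cs) m, rsplit (Node cs) m)) (filter (\<lambda>m. Q (exit_idx cs m)) [1..<Suc (nleaves (Node cs))]))) p) :: 'k)"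
      unfolding c using True LL by (cases "u = Leaf \<and> v = Leaf") (simp_all del: nleaves.simps lsplit.simps rsplit.simps)
  next
    case False
    have zero: "count (mset (map (\<lambda>m. (lsplit (Node cs) m, rsplit (Node cs) m)) (filter (\<lambda>m. Q (exit_idx cs m)) [1..<Suc (nleaves (Node cs))]))) p = 0"
      unfolding p by (rule count_filter_nonwf[OF wt False])
    have nc: "\<not> (wf_tree u \<and> wf_tree v \<and> \<not> (u = Leaf \<and> v = Leaf))" using False by blast
    show "(if wf_tree u \<and> wf_tree v \<and> \<not> (u = Leaf \<and> v = Leaf) then of_nat (count (op u v) (Node cs)) else 0)
      = (of_nat (count (mset (map (\<lambda>m. (lsplit (Node cs) m, rsplit (Node cs) m)) (filter (\<lambda>m. Q (exit_idx cs m)) [1..<Suc (nleaves (Node cs))]))) p) :: 'k)"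
      by (simp only: nc zero if_False of_nat_0)
  qed
qed

theorem mainTheorem10:
  fixes t :: ptree
  assumes "wf_tree t" and "t \<noteq> Leaf"
  shows "(Delta t :: ptree \<times> ptree \<Rightarrow> 'k::field)
           = (\<Sum>m\<in>{1..nleaves t}. tens (lsplit t m) (rsplit t m))
       \<and> (Delta_op lprod t :: ptree \<times> ptree \<Rightarrow> 'k)
           = (\<Sum>m\<in>{m \<in> {1..nleaves t}. exit_idx (children t) m = length (children t) - 1}.
                tens (lsplit t m) (rsplit t m))
       \<and> (Delta_op rprod t :: ptree \<times> ptree \<Rightarrow> 'k)
           = (\<Sum>m\<in>{m \<in> {1..nleaves t}. exit_idx (children t) m = 0}.
                tens (lsplit t m) (rsplit t m))
       \<and> (Delta_op dprod t :: ptree \<times> ptree \<Rightarrow> 'k)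
           = (\<Sum>m\<in>{m \<in> {1..nleaves t}. exit_idx (children t) m \<noteq> 0
                     \<and> exit_idx (children t) m \<noteq> length (children t) - 1}.
                tens (lsplit t m) (rsplit t m))"
proof -
  obtain cs where t: "t = Node cs" using assms(2) by (cases t) auto
  have wt: "wf_tree (Node cs)" using assms(1) t by simp
  have len: "2 \<le> length cs" using wt by simp
  have fin: "finite {0..<length cs}" by simp
  have lt: "length cs - Suc 0 < length cs" using len by simp
  have csne: "cs \<noteq> []" using len by auto
  have D: "(Delta (Node cs) :: ptree \<times> ptree \<Rightarrow> 'k) = (\<Sum>m\<in>{1..nleaves (Node cs)}. tens (lsplit (Node cs) m) (rsplit (Node cs) m))"
  proof (rule ext)
    fix p :: "ptree \<times> ptree"
    obtain u v where p: "p = (u, v)" by (cases p)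
    have R: "(\<Sum>m\<in>{1..nleaves (Node cs)}. tens (lsplit (Node cs) m) (rsplit (Node cs) m) :: ptree \<times> ptree \<Rightarrow> 'k) p
       = of_nat (count (mset (map (\<lambda>m. (lsplit (Node cs) m, rsplit (Node cs) m)) (filter (\<lambda>m. True) [1..<Suc (nleaves (Node cs))]))) p)"
      by (rule tens_sum[where P="\<lambda>_. True", unfolded sepT])
    have DL: "(Delta (Node cs) :: ptree \<times> ptree \<Rightarrow> 'k) p
       = (if wf_tree u \<and> wf_tree v then of_nat (count (star u v) (Node cs)) else 0)"
      by (simp add: Delta_def p del: nleaves.simps lsplit.simps rsplit.simps star.simps)
    have FF: "map (\<lambda>m. (lsplit (Node cs) m, rsplit (Node cs) m)) (filter (\<lambda>m. True) [1..<Suc (nleaves (Node cs))]) = F (Node cs)"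
      unfolding F_def by (simp only: filtT)
    show "(Delta (Node cs) :: ptree \<times> ptree \<Rightarrow> 'k) p = (\<Sum>m\<in>{1..nleaves (Node cs)}. tens (lsplit (Node cs) m) (rsplit (Node cs) m)) p"
      unfolding DL R FF
    proof (cases "wf_tree u \<and> wf_tree v")
      case True
      have "count (mset (F (Node cs))) p = count (star u v) (Node cs)" using main[of u v "Node cs"] True wt p by simp
      then show "(if wf_tree u \<and> wf_tree v then of_nat (count (star u v) (Node cs)) else 0) = (of_nat (count (mset (F (Node cs))) p) :: 'k)"
        using True by simp
    next
      case False
      have zero: "count (mset (F (Node cs))) p = 0"
        using count_filter_nonwf[OF wt False, of "\<lambda>m. True"] unfolding FF p .
      show "(if wf_tree u \<and> wf_tree v then of_nat (count (star u v) (Node cs)) else 0) = (of_nat (count (mset (F (Node cs))) p) :: 'k)"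
        by (simp only: False zero if_False of_nat_0)
    qed
  qed
  have L: "(Delta_op lprod (Node cs) :: ptree \<times> ptree \<Rightarrow> 'k)
     = (\<Sum>m\<in>{m \<in> {1..nleaves (Node cs)}. (\<lambda>j. j = length cs - 1) (exit_idx cs m)}. tens (lsplit (Node cs) m) (rsplit (Node cs) m))"
  proof (rule final_op[OF wt])
    fix u v assume "wf_tree u" "wf_tree v"
    then show "count (lprod u v) (Node cs) = (\<Sum>j\<in>{0..<length cs}. if j = length cs - 1 then count (mset (blk cs j)) (u, v) else 0)"
      using Lblk[OF _ _ wt] len lt by simp
  qed simp
  have R: "(Delta_op rprod (Node cs) :: ptree \<times> ptree \<Rightarrow> 'k)
     = (\<Sum>m\<in>{m \<in> {1..nleaves (Node cs)}. (\<lambda>j. j = 0) (exit_idx cs m)}. tens (lsplit (Node cs) m) (rsplit (Node cs) m))"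
  proof (rule final_op[OF wt])
    fix u v assume "wf_tree u" "wf_tree v"
    then show "count (rprod u v) (Node cs) = (\<Sum>j\<in>{0..<length cs}. if j = 0 then count (mset (blk cs j)) (u, v) else 0)"
      using Rblk[OF _ _ wt] len csne by simp
  qed simp
  have Dd: "(Delta_op dprod (Node cs) :: ptree \<times> ptree \<Rightarrow> 'k)
     = (\<Sum>m\<in>{m \<in> {1..nleaves (Node cs)}. (\<lambda>j. j \<noteq> 0 \<and> j \<noteq> length cs - 1) (exit_idx cs m)}. tens (lsplit (Node cs) m) (rsplit (Node cs) m))"
  proof (rule final_op[OF wt])
    fix u v assume "wf_tree u" "wf_tree v"
    then have e: "count (dprod u v) (Node cs) = (\<Sum>j\<in>{1..<length cs - 1}. count (mset (blk cs j)) (u, v))"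
      using Dblk[OF _ _ wt] by simp
    have s: "{1..<length cs - 1} = {j \<in> {0..<length cs}. j \<noteq> 0 \<and> j \<noteq> length cs - 1}" by auto
    show "count (dprod u v) (Node cs) = (\<Sum>j\<in>{0..<length cs}. if j \<noteq> 0 \<and> j \<noteq> length cs - 1 then count (mset (blk cs j)) (u, v) else 0)"
      unfolding e s by (rule sum.inter_filter[OF fin])
  qed simp
  show ?thesis unfolding t children.simps by (intro conjI D L R Dd)
qed


end
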